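(* Let $T\in(\mathbb{C}^n)^{\otimes3}$ be a symmetric tensor with $T=\sum_{i=1}^r u_i^{\otimes3}$, where $u_1,\dots,u_r\in\mathbb{C}^n$ are linearly independent. Let $T_1,\dots,T_n$ be the slices of $T$, let $S\subset\mathbb{C}$ be a finite set, pick $\alpha_1,\dots,\alpha_n$ uniformly and independently at random from $S$, and set $T^{(\alpha)}=\sum_{i=1}^n\alpha_iT_i$. Let $T^{(\alpha)}=P_r\Sigma Q_r^*$ be a compact singular value decomposition, and let $p_1,\dots,p_r$ be the columns of $P_r$. Then, with probability at least $1-\frac{r}{|S|}$, $P_r$ is a semi-unitary $n\times r$ matrix with $\mathrm{span}\{p_1,\dots,p_r\}=\mathrm{span}\{u_1,\dots,u_r\}$.
   Context: The $k$-th slice of $T=(T_{ijk})$ is $T_k=(T_{ijk})_{i,j}$. A matrix $P\in\mathbb{C}^{n\times r}$ is semi-unitary if $P^*P=I_r$. For a matrix $M\in\mathbb{C}^{m\times n}$ of rank $s$, a compact singular value decomposition is a factorization $M=U_s\Sigma_sV_s^*$ with $\Sigma_s$ an $s\times s$ diagonal matrix with positive diagonal entries and $U_s\in\mathbb{C}^{m\times s}$, $V_s\in\mathbb{C}^{n\times s}$ semi-unitary. *)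

theory Defs
  imports "Jordan_Normal_Form.Schur_Decomposition" "Jordan_Normal_Form.DL_Rank"
    "HOL-Probability.Probability_Mass_Function"
begin

definition cspan :: "nat \<Rightarrow> complex Matrix.vec set \<Rightarrow> complex Matrix.vec set" where
  "cspan n A = LinearCombinations.module.span class_ring (module_vec TYPE(complex) n) A"

definition clin_indpt :: "nat \<Rightarrow> complex Matrix.vec set \<Rightarrow> bool" where
  "clin_indpt n A = LinearCombinations.module.lin_indpt class_ring (module_vec TYPE(complex) n) A"

definition semi_unitary :: "complex mat \<Rightarrow> bool" where
  "semi_unitary P \<longleftrightarrow> mat_adjoint P * P = 1\<^sub>m (dim_col P)"

definition compact_svd :: "complex mat \<Rightarrow> nat \<Rightarrow> complex mat \<Rightarrow> complex mat \<Rightarrow> complex mat \<Rightarrow> bool" where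
  "compact_svd M s U \<Sigma> V \<longleftrightarrow>
     vec_space.rank (dim_row M) M = s \<and>
     U \<in> carrier_mat (dim_row M) s \<and> \<Sigma> \<in> carrier_mat s s \<and> V \<in> carrier_mat (dim_col M) s \<and>
     diagonal_mat \<Sigma> \<and> (\<forall>i<s. \<Sigma> $$ (i,i) \<in> \<real> \<and> Re (\<Sigma> $$ (i,i)) > 0) \<and>
     semi_unitary U \<and> semi_unitary V \<and>
     M = U * \<Sigma> * mat_adjoint V"

definition sym_tensor :: "nat \<Rightarrow> (nat \<Rightarrow> complex Matrix.vec) \<Rightarrow> nat \<Rightarrow> nat \<Rightarrow> nat \<Rightarrow> complex" where
  "sym_tensor r u i j k = (\<Sum>l<r. u l $ i * u l $ j * u l $ k)"

definition slice :: "nat \<Rightarrow> (nat \<Rightarrow> nat \<Rightarrow> nat \<Rightarrow> complex) \<Rightarrow> nat \<Rightarrow> complex mat" where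
  "slice n T k = Matrix.mat n n (\<lambda>(i,j). T i j k)"

definition slice_comb :: "nat \<Rightarrow> (nat \<Rightarrow> nat \<Rightarrow> nat \<Rightarrow> complex) \<Rightarrow> (nat \<Rightarrow> complex) \<Rightarrow> complex mat" where
  "slice_comb n T \<alpha> = Matrix.mat n n (\<lambda>(i,j). \<Sum>k<n. \<alpha> k * slice n T k $$ (i,j))"

end

theory Submission
  imports Defs
begin

lemma cspan_eq: "cspan n A = LinearCombinations.module.span class_ring (module_vec TYPE(complex) n) A"
  by (simp add: cspan_def)

context vec_space begin
lemma span_cols_mult_rinv:
  assumes A: "A \<in> carrier_mat n k" and B: "B \<in> carrier_mat k m" and C: "C \<in> carrier_mat m k"
    and BC: "B * C = 1\<^sub>m k"
  shows "span (set (cols (A * B))) = span (set (cols A))"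
proof -
  have AB: "A * B \<in> carrier_mat n m" using A B by auto
  have "col_space (A * B) = col_space A"
  proof -
    have "{y \<in> carrier_vec n. \<exists>x\<in>carrier_vec m. (A * B) *\<^sub>v x = y}
        = {y \<in> carrier_vec n. \<exists>x\<in>carrier_vec k. A *\<^sub>v x = y}"
    proof (intro Collect_cong conj_cong refl iffI)
      fix y assume "\<exists>x\<in>carrier_vec m. (A * B) *\<^sub>v x = y"
      then obtain x where x: "x \<in> carrier_vec m" "(A * B) *\<^sub>v x = y" by blast
      then have "A *\<^sub>v (B *\<^sub>v x) = y" using A B by (simp add: assoc_mult_mat_vec)
      moreover have "B *\<^sub>v x \<in> carrier_vec k" using B x by simp
      ultimately show "\<exists>x\<in>carrier_vec k. A *\<^sub>v x = y" by blast
    next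
      fix y assume "\<exists>x\<in>carrier_vec k. A *\<^sub>v x = y"
      then obtain x where x: "x \<in> carrier_vec k" "A *\<^sub>v x = y" by blast
      have "(A * B) *\<^sub>v (C *\<^sub>v x) = A *\<^sub>v ((B * C) *\<^sub>v x)"
        using A B C x by (simp add: assoc_mult_mat_vec)
      also have "\<dots> = y" using BC x by simp
      finally show "\<exists>x\<in>carrier_vec m. (A * B) *\<^sub>v x = y" using C x(1)
        by (intro bexI[of _ "C *\<^sub>v x"]) auto
    qed
    then show ?thesis using col_space_eq[OF A] col_space_eq[OF AB] A B AB by simp
  qed
  then show ?thesis unfolding col_space_def .
qed
end

lemma mat_adjoint_carrier: "A \<in> carrier_mat n m \<Longrightarrow> mat_adjoint A \<in> carrier_mat m n"
  unfolding mat_adjoint_def by (auto simp: mat_of_rows_def)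

lemma mat_adjoint_index: "i < dim_col A \<Longrightarrow> j < dim_row A \<Longrightarrow> mat_adjoint A $$ (i,j) = cnj (A $$ (j,i))"
  unfolding mat_adjoint_def by (auto simp: mat_of_rows_def)

lemma diag_rinv:
  fixes D :: "complex mat"
  assumes D: "D \<in> carrier_mat s s" and dg: "diagonal_mat D" and nz: "\<And>i. i < s \<Longrightarrow> D $$ (i,i) \<noteq> 0"
  shows "D * Matrix.mat s s (\<lambda>(i,j). if i = j then 1 / D $$ (i,i) else 0) = 1\<^sub>m s"
proof (rule eq_matI)
  fix i j assume i: "i < dim_row (1\<^sub>m s :: complex mat)" and j: "j < dim_col (1\<^sub>m s :: complex mat)"
  then have i: "i < s" and j: "j < s" by auto
  have "(D * Matrix.mat s s (\<lambda>(i,j). if i = j then 1 / D $$ (i,i) else 0)) $$ (i,j)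
      = (\<Sum>k<s. D $$ (i,k) * (if k = j then 1 / D $$ (k,k) else 0))"
    using D i j by (simp add: scalar_prod_def row_def col_def lessThan_atLeast0)
  also have "\<dots> = (\<Sum>k<s. if k = j then D $$ (i,j) / D $$ (j,j) else 0)"
    by (intro sum.cong refl) auto
  also have "\<dots> = D $$ (i,j) / D $$ (j,j)" using j by simp
  also have "\<dots> = (if i = j then 1 else 0)"
    using dg D i j nz[OF j] unfolding diagonal_mat_def by auto
  finally show "(D * Matrix.mat s s (\<lambda>(i,j). if i = j then 1 / D $$ (i,i) else 0)) $$ (i,j) = 1\<^sub>m s $$ (i,j)"
    using i j by simp
qed (use D in auto)


lemma left_inverse_exists:
  fixes U :: "complex mat"
  assumes U: "U \<in> carrier_mat n r" and dist: "distinct (cols U)"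
    and li: "clin_indpt n (set (cols U))"
  shows "\<exists>L \<in> carrier_mat r n. L * U = 1\<^sub>m r"
proof -
  interpret V: vec_space "TYPE(complex)" n .
  define G where "G = mat_adjoint U * U"
  have UA: "mat_adjoint U \<in> carrier_mat r n" using mat_adjoint_carrier[OF U] .
  have G: "G \<in> carrier_mat r r" unfolding G_def using UA U by auto
  have "Determinant.det G \<noteq> 0"
  proof
    assume "Determinant.det G = 0"
    then obtain v where v: "v \<in> carrier_vec r" "v \<noteq> 0\<^sub>v r" "G *\<^sub>v v = 0\<^sub>v r"
      using det_0_iff_vec_prod_zero[OF G] by blast
    define w where "w = U *\<^sub>v v"
    have w: "w \<in> carrier_vec n" unfolding w_def using U v by auto
    have Gv: "G *\<^sub>v v = mat_adjoint U *\<^sub>v w"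
      unfolding G_def w_def using U UA v by (simp add: assoc_mult_mat_vec)
    have wi: "\<And>j. j < n \<Longrightarrow> w $ j = (\<Sum>i<r. U $$ (j,i) * v $ i)"
      unfolding w_def using U v by (auto simp: scalar_prod_def row_def lessThan_atLeast0)
    have Gvi: "\<And>i. i < r \<Longrightarrow> (G *\<^sub>v v) $ i = (\<Sum>j<n. cnj (U $$ (j,i)) * w $ j)"
      unfolding Gv using UA U w
      by (auto simp: scalar_prod_def row_def lessThan_atLeast0 mat_adjoint_index)
    have "0 = (\<Sum>i<r. cnj (v $ i) * (G *\<^sub>v v) $ i)" using v by simp
    also have "\<dots> = (\<Sum>i<r. \<Sum>j<n. cnj (v $ i) * cnj (U $$ (j,i)) * w $ j)"
      using Gvi by (simp add: sum_distrib_left mult.assoc)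
    also have "\<dots> = (\<Sum>j<n. \<Sum>i<r. cnj (v $ i) * cnj (U $$ (j,i)) * w $ j)"
      by (rule sum.swap)
    also have "\<dots> = (\<Sum>j<n. w $ j * cnj (w $ j))"
      using wi by (simp add: sum_distrib_left sum_distrib_right mult_ac)
    also have "\<dots> = w \<bullet>c w" using w by (simp add: scalar_prod_def lessThan_atLeast0)
    finally have "w \<bullet>c w = 0" by simp
    then have "w = 0\<^sub>v n" using w by simp
    then have "V.lin_dep (set (cols U))"
      using V.lin_depI[OF U v(1) v(2)] dist unfolding w_def by blast
    then show False using li unfolding clin_indpt_def by blast
  qed
  from det_non_zero_imp_unit[OF G this, unfolded Units_def, of "()"]
  obtain Gi where Gi: "Gi \<in> carrier_mat r r" "Gi * G = 1\<^sub>m r"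
    by (auto simp: ring_mat_simps)
  show ?thesis
  proof (intro bexI[of _ "Gi * mat_adjoint U"])
    show "Gi * mat_adjoint U \<in> carrier_mat r n" using Gi UA by auto
    have "Gi * mat_adjoint U * U = Gi * G" unfolding G_def using Gi UA U by (simp add: assoc_mult_mat)
    then show "Gi * mat_adjoint U * U = 1\<^sub>m r" using Gi by simp
  qed
qed


lemma good_alpha:
  fixes n r :: nat and u :: "nat \<Rightarrow> complex Matrix.vec" and \<alpha> :: "nat \<Rightarrow> complex"
  assumes u_dim: "\<And>l. l < r \<Longrightarrow> u l \<in> carrier_vec n"
    and u_inj: "inj_on u {..<r}"
    and u_indep: "clin_indpt n (u ` {..<r})"
    and dnz: "\<And>l. l < r \<Longrightarrow> (\<Sum>k<n. \<alpha> k * u l $ k) \<noteq> 0"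
    and svd: "compact_svd (slice_comb n (sym_tensor r u) \<alpha>) s P \<Sigma> Q"
  shows "s = r \<and> P \<in> carrier_mat n r \<and> semi_unitary P \<and>
                 cspan n (set (cols P)) = cspan n (u ` {..<r})"
proof -
  interpret V: vec_space "TYPE(complex)" n .
  define M where "M = slice_comb n (sym_tensor r u) \<alpha>"
  define d where "d l = (\<Sum>k<n. \<alpha> k * u l $ k)" for l
  define U where "U = Matrix.mat n r (\<lambda>(i,l). u l $ i)"
  define E where "E = Matrix.mat r n (\<lambda>(l,j). d l * u l $ j)"
  have M: "M \<in> carrier_mat n n" unfolding M_def slice_comb_def by auto
  have U: "U \<in> carrier_mat n r" unfolding U_def by auto
  have E: "E \<in> carrier_mat r n" unfolding E_def by auto
  have colU: "col U l = u l" if "l < r" for l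
    using u_dim[OF that] that unfolding U_def by (auto intro!: eq_vecI)
  have colsU: "cols U = map u [0..<r]"
    unfolding cols_def using U colU by (auto intro!: map_cong)
  have setU: "set (cols U) = u ` {..<r}" unfolding colsU by auto
  have distU: "distinct (cols U)" unfolding colsU distinct_map using u_inj
    by (simp add: lessThan_atLeast0)
  have liU: "clin_indpt n (set (cols U))" using u_indep setU by simp
  have ME: "M = U * E"
  proof (rule eq_matI)
    fix i j assume i: "i < dim_row (U * E)" and j: "j < dim_col (U * E)"
    then have i: "i < n" and j: "j < n" using U E by auto
    have "(U * E) $$ (i,j) = (\<Sum>l<r. u l $ i * (d l * u l $ j))"
      using i j U E by (simp add: U_def E_def scalar_prod_def row_def col_def lessThan_atLeast0)
    also have "\<dots> = (\<Sum>l<r. \<Sum>k<n. \<alpha> k * (u l $ i * u l $ j * u l $ k))"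
      unfolding d_def by (simp add: sum_distrib_left sum_distrib_right mult_ac)
    also have "\<dots> = (\<Sum>k<n. \<Sum>l<r. \<alpha> k * (u l $ i * u l $ j * u l $ k))"
      by (rule sum.swap)
    also have "\<dots> = M $$ (i,j)"
      using i j by (simp add: M_def slice_comb_def slice_def sym_tensor_def sum_distrib_left)
    finally show "M $$ (i,j) = (U * E) $$ (i,j)" by simp
  qed (use M U E in auto)
  obtain L where L: "L \<in> carrier_mat r n" "L * U = 1\<^sub>m r"
    using left_inverse_exists[OF U distU liU] by blast
  define F where "F = Matrix.mat n r (\<lambda>(j,m). L $$ (m,j) / d m)"
  have F: "F \<in> carrier_mat n r" unfolding F_def by auto
  have EF: "E * F = 1\<^sub>m r"
  proof (rule eq_matI)
    fix l m assume l: "l < dim_row (1\<^sub>m r :: complex mat)" and m: "m < dim_col (1\<^sub>m r :: complex mat)"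
    then have l: "l < r" and m: "m < r" by auto
    have LU: "(\<Sum>j<n. L $$ (m,j) * u l $ j) = (if m = l then 1 else 0)"
    proof -
      have "(L * U) $$ (m,l) = (\<Sum>j<n. L $$ (m,j) * u l $ j)"
        using L(1) U l m by (simp add: U_def scalar_prod_def row_def col_def lessThan_atLeast0)
      moreover have "(L * U) $$ (m,l) = (if m = l then 1 else 0)" using L(2) l m by simp
      ultimately show ?thesis by simp
    qed
    have "(E * F) $$ (l,m) = (\<Sum>j<n. d l * u l $ j * (L $$ (m,j) / d m))"
      using l m E F by (simp add: E_def F_def scalar_prod_def row_def col_def lessThan_atLeast0)
    also have "\<dots> = d l / d m * (\<Sum>j<n. L $$ (m,j) * u l $ j)"
      by (simp add: sum_distrib_left field_simps)
    also have "\<dots> = d l / d m * (if m = l then 1 else 0)"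
      using LU by simp
    also have "\<dots> = 1\<^sub>m r $$ (l,m)" using l m dnz[OF m] unfolding d_def by auto
    finally show "(E * F) $$ (l,m) = 1\<^sub>m r $$ (l,m)" .
  qed (use E F in auto)
  have spanMU: "V.span (set (cols M)) = V.span (u ` {..<r})"
    unfolding ME using V.span_cols_mult_rinv[OF U E F EF] setU by simp
  have rankU: "V.rank U = r"
    using V.lin_indpt_full_rank[OF U distU] liU unfolding clin_indpt_def by blast
  have rankM: "V.rank M = r"
    using rankU spanMU setU unfolding V.rank_def by simp
  from svd[folded M_def] have
    rk: "V.rank M = s" and P: "P \<in> carrier_mat n s" and S: "\<Sigma> \<in> carrier_mat s s"
    and Q: "Q \<in> carrier_mat n s" and dg: "diagonal_mat \<Sigma>"
    and pos: "\<forall>i<s. \<Sigma> $$ (i,i) \<in> \<real> \<and> Re (\<Sigma> $$ (i,i)) > 0"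
    and suP: "semi_unitary P" and suQ: "semi_unitary Q"
    and Meq: "M = P * \<Sigma> * mat_adjoint Q"
    unfolding compact_svd_def using M by auto
  have sr: "s = r" using rk rankM by simp
  define Si where "Si = Matrix.mat s s (\<lambda>(i,j). if i = j then 1 / \<Sigma> $$ (i,i) else 0)"
  have Si: "Si \<in> carrier_mat s s" unfolding Si_def by auto
  have nz: "\<Sigma> $$ (i,i) \<noteq> 0" if "i < s" for i using pos that by fastforce
  have SSi: "\<Sigma> * Si = 1\<^sub>m s" unfolding Si_def by (rule diag_rinv[OF S dg nz])
  have QA: "mat_adjoint Q \<in> carrier_mat s n" using mat_adjoint_carrier[OF Q] .
  have QQ: "mat_adjoint Q * Q = 1\<^sub>m s" using suQ Q unfolding semi_unitary_def by auto
  have B: "\<Sigma> * mat_adjoint Q \<in> carrier_mat s n" using S QA by auto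
  have C: "Q * Si \<in> carrier_mat n s" using Q Si by auto
  have BC: "(\<Sigma> * mat_adjoint Q) * (Q * Si) = 1\<^sub>m s"
  proof -
    have "(\<Sigma> * mat_adjoint Q) * (Q * Si) = \<Sigma> * (mat_adjoint Q * (Q * Si))"
      by (rule assoc_mult_mat[OF S QA C])
    also have "mat_adjoint Q * (Q * Si) = (mat_adjoint Q * Q) * Si"
      by (rule assoc_mult_mat[OF QA Q Si, symmetric])
    also have "\<dots> = Si" using QQ Si by simp
    finally show ?thesis using SSi by simp
  qed
  have MP: "M = P * (\<Sigma> * mat_adjoint Q)" using Meq P S QA by (simp add: assoc_mult_mat)
  have "V.span (set (cols M)) = V.span (set (cols P))"
    unfolding MP using V.span_cols_mult_rinv[OF P B C BC] .
  then have "cspan n (set (cols P)) = cspan n (u ` {..<r})"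
    using spanMU unfolding cspan_def by simp
  then show ?thesis using sr P suP by simp
qed


lemma card_bad:
  fixes c :: "nat \<Rightarrow> complex" and S :: "complex set"
  assumes k0: "k0 < n" and ck0: "c k0 \<noteq> 0" and S_fin: "finite S"
  shows "card {\<alpha> \<in> PiE {..<n} (\<lambda>_. S). (\<Sum>k<n. \<alpha> k * c k) = 0} * card S
           \<le> card (PiE {..<n} (\<lambda>_. S))"
proof -
  define B where "B = {\<alpha> \<in> PiE {..<n} (\<lambda>_. S). (\<Sum>k<n. \<alpha> k * c k) = 0}"
  define K where "K = {..<n} - {k0}"
  have cardA: "card (PiE {..<n} (\<lambda>_. S)) = card S ^ n" by (simp add: card_PiE)
  have cardK: "card (PiE K (\<lambda>_. S)) = card S ^ (n - 1)"
    using k0 by (simp add: card_PiE K_def)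
  have inj: "inj_on (\<lambda>\<alpha>. restrict \<alpha> K) B"
  proof (rule inj_onI)
    fix a b assume a: "a \<in> B" and b: "b \<in> B" and eq: "restrict a K = restrict b K"
    have onK: "a k = b k" if "k \<in> K" for k using fun_cong[OF eq, of k] that by simp
    have split: "(\<Sum>k<n. f k * c k) = f k0 * c k0 + (\<Sum>k\<in>K. f k * c k)" for f :: "nat \<Rightarrow> complex"
      unfolding K_def using k0 by (simp add: sum.remove)
    have "(\<Sum>k\<in>K. a k * c k) = (\<Sum>k\<in>K. b k * c k)" using onK by simp
    then have h1: "a k0 * c k0 + (\<Sum>k\<in>K. b k * c k) = 0"
      using a split[of a] unfolding B_def by simp
    have h2: "b k0 * c k0 + (\<Sum>k\<in>K. b k * c k) = 0"
      using b split[of b] unfolding B_def by simp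
    from h1 h2 have "a k0 * c k0 = b k0 * c k0" by (metis add_right_cancel)
    then have ak0: "a k0 = b k0" using ck0 by simp
    show "a = b"
    proof
      fix x show "a x = b x"
      proof (cases "x < n")
        case True show ?thesis
        proof (cases "x = k0")
          case True then show ?thesis using ak0 by simp
        next
          case False then have "x \<in> K" unfolding K_def using \<open>x < n\<close> by simp
          then show ?thesis using onK by simp
        qed
      next
        case False
        have "a x = undefined" using a False unfolding B_def by (intro PiE_arb[of a "{..<n}"]) auto
        moreover have "b x = undefined" using b False unfolding B_def by (intro PiE_arb[of b "{..<n}"]) auto
        ultimately show ?thesis by simp
      qed
    qed
  qed
  have sub: "(\<lambda>\<alpha>. restrict \<alpha> K) ` B \<subseteq> PiE K (\<lambda>_. S)"
  proof
    fix y assume "y \<in> (\<lambda>\<alpha>. restrict \<alpha> K) ` B"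
    then obtain a where a: "a \<in> B" "y = restrict a K" by blast
    then have "a \<in> PiE {..<n} (\<lambda>_. S)" unfolding B_def by blast
    then have "a \<in> Pi K (\<lambda>_. S)" unfolding K_def by (auto simp: PiE_def Pi_def)
    then show "y \<in> PiE K (\<lambda>_. S)" using a(2) by simp
  qed
  have "card B \<le> card (PiE K (\<lambda>_. S))"
    using card_inj_on_le[OF inj sub] S_fin by (simp add: finite_PiE K_def)
  then have "card B * card S \<le> card S ^ (n - 1) * card S" using cardK by simp
  also have "\<dots> = card S ^ n"
  proof -
    obtain m where "n = Suc m" using k0 by (cases n) auto
    then show ?thesis by (simp add: power_Suc2)
  qed
  finally show ?thesis unfolding B_def cardA .
qed

lemma aux_ineq:
  fixes N c x y r :: real
  assumes N: "N > 0" and c: "c > 0" and y: "c * y \<le> r * N" and xy: "x + y = N"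
  shows "1 - r / c \<le> x / N"
proof -
  have x: "x = N - y" using xy by simp
  have "(c - r) * N \<le> x * c" unfolding x using y by (simp add: algebra_simps)
  then show ?thesis using N c by (simp add: field_simps)
qed

theorem theorem4p3:
  fixes n r :: nat and u :: "nat \<Rightarrow> complex Matrix.vec" and S :: "complex set"
  assumes u_dim: "\<And>l. l < r \<Longrightarrow> u l \<in> carrier_vec n"
    and u_inj: "inj_on u {..<r}"
    and u_indep: "clin_indpt n (u ` {..<r})"
    and S_fin: "finite S" and S_ne: "S \<noteq> {}"
  shows "measure_pmf.prob (pmf_of_set (PiE {..<n} (\<lambda>_. S)))
           {\<alpha>. \<forall>s P \<Sigma> Q. compact_svd (slice_comb n (sym_tensor r u) \<alpha>) s P \<Sigma> Q \<longrightarrow>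
                 s = r \<and> P \<in> carrier_mat n r \<and> semi_unitary P \<and>
                 cspan n (set (cols P)) = cspan n (u ` {..<r})}
         \<ge> 1 - real r / real (card S)"
proof -
  interpret V: vec_space "TYPE(complex)" n .
  define A where "A = PiE {..<n} (\<lambda>_::nat. S)"
  define G where "G = {\<alpha>. \<forall>s P \<Sigma> Q. compact_svd (slice_comb n (sym_tensor r u) \<alpha>) s P \<Sigma> Q \<longrightarrow>
                 s = r \<and> P \<in> carrier_mat n r \<and> semi_unitary P \<and>
                 cspan n (set (cols P)) = cspan n (u ` {..<r})}"
  define Bad where "Bad l = {\<alpha> \<in> A. (\<Sum>k<n. \<alpha> k * u l $ k) = 0}" for l
  have Afin: "finite A" unfolding A_def using S_fin by (simp add: finite_PiE)
  have Ane: "A \<noteq> {}" unfolding A_def using S_ne by (simp add: PiE_eq_empty_iff)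
  have cA: "card A > 0" using Afin Ane by (simp add: card_gt_0_iff)
  have cS: "card S > 0" using S_fin S_ne by (simp add: card_gt_0_iff)
  have sub: "A - G \<subseteq> (\<Union>l\<in>{..<r}. Bad l)"
  proof
    fix \<alpha> assume a: "\<alpha> \<in> A - G"
    show "\<alpha> \<in> (\<Union>l\<in>{..<r}. Bad l)"
    proof (rule ccontr)
      assume "\<alpha> \<notin> (\<Union>l\<in>{..<r}. Bad l)"
      then have "\<And>l. l < r \<Longrightarrow> (\<Sum>k<n. \<alpha> k * u l $ k) \<noteq> 0" using a unfolding Bad_def by auto
      then have "\<alpha> \<in> G" unfolding G_def using good_alpha[OF u_dim u_inj u_indep] by blast
      then show False using a by blast
    qed
  qed
  have badc: "card (Bad l) * card S \<le> card A" if l: "l < r" for l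
  proof -
    have "0\<^sub>v n \<notin> u ` {..<r}"
      using V.zero_nin_lin_indpt[of "u ` {..<r}"] u_indep u_dim unfolding clin_indpt_def
      by (auto simp: class_ring_simps)
    then have "u l \<noteq> 0\<^sub>v n" using l by (metis image_eqI lessThan_iff)
    then obtain k0 where k0: "k0 < n" "u l $ k0 \<noteq> 0" using u_dim[OF l]
      by (metis carrier_vecD eq_vecI index_zero_vec(1) index_zero_vec(2))
    show ?thesis unfolding Bad_def A_def using card_bad[of k0 n "\<lambda>k. u l $ k" S, OF k0 S_fin] by simp
  qed
  have "card (A - G) \<le> card (\<Union>l\<in>{..<r}. Bad l)"
    by (rule card_mono[OF _ sub]) (auto simp: Bad_def Afin)
  also have "\<dots> \<le> (\<Sum>l<r. card (Bad l))" by (rule card_UN_le) simp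
  finally have "card (A - G) * card S \<le> (\<Sum>l<r. card (Bad l) * card S)"
    using mult_right_mono[of "card (A - G)" "\<Sum>l<r. card (Bad l)" "card S"]
    by (simp add: sum_distrib_right)
  also have "\<dots> \<le> (\<Sum>l<r. card A)" by (rule sum_mono) (use badc in auto)
  finally have y: "real (card (A - G)) * real (card S) \<le> real r * real (card A)"
    by (simp flip: of_nat_mult)
  have xy: "real (card (A \<inter> G)) + real (card (A - G)) = real (card A)"
    using card_Int_Diff[OF Afin, of G] by simp
  have "1 - real r / real (card S) \<le> real (card (A \<inter> G)) / real (card A)"
    by (rule aux_ineq) (use cA cS y xy in \<open>simp_all add: mult.commute add.commute\<close>)
  then show ?thesis
    using measure_pmf_of_set[OF Ane Afin, of G] unfolding A_def G_def by simp
qed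

end
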